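(* In any execution of the algorithm described in the context, for every round $r>0$, every non-faulty process $p_i$ eventually receives enough valid messages to satisfy the $\mathsf{is\_valid}$ predicate for round $r$; that is, eventually there exist $v\in\{0,1\}$ and $S\subseteq\mathit{aux\_values}_i$ with $\mathsf{is\_valid}(r,v,S)$ true.
   Context: Model. There are $n$ processes $p_1,\dots,p_n$ ($i$ is the index of $p_i$) communicating over an asynchronous, reliable, point-to-point network: every pair of processes is connected by a channel, message delays are finite but unbounded, and the network does not lose, duplicate, modify or create messages. "Broadcast" means sending the message to every process (including oneself). Messages are signed with unforgeable digital signatures ($\langle m\rangle_j$ denotes message $m$ signed by $p_j$); malformed messages or messages with invalid signatures are ignored. Up to $t$ processes are Byzantine (faulty) and may behave arbitrarily and collude, but cannot forge signatures of other processes; the remaining processes are non-faulty and follow the algorithm. It is assumed that $t<n/3$. Algorithm. Messages are of the form $\mathrm{AUX}[r](v)$ with round $r\in\mathbb{N}$ and $v\in\{0,1\}$, sent as a pair $(\langle \mathrm{AUX}[r](v)\rangle_j,\mathit{proofs})$ where $\mathit{proofs}$ is a set of signed AUX messages. The predicate $\mathsf{is\_valid}(r,est,\mathit{proofs})$ is: if $r=0$ return true; if $r=1$ return true iff $\mathit{proofs}$ contains signed $\mathrm{AUX}[0](est)$ messages from $t+1$ different processes; otherwise let $b=(r-1)\bmod 2$; if $est=b$, return true iff ($r=2$ and $\mathit{proofs}$ contains signed $\mathrm{AUX}[0](b)$ from $t+1$ different processes) or ($\mathit{proofs}$ contains signed $\mathrm{AUX}[r-2](b)$ from $n-t$ different processes);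 if $est\neq b$, return true iff $\mathit{proofs}$ contains signed $\mathrm{AUX}[r-1](\neg b)$ from $n-t$ different processes. Each process $p_i$ with proposal $v_i$ keeps a round counter $r_i$, a set $\mathit{aux\_values}_i$ of signed AUX messages, and timers indexed by naturals (timers $2r$ and $2r+1$ belong to round $r$; starting an already started or expired timer does nothing). It sets $r_i:=0$, $\mathit{aux\_values}_i:=\emptyset$, broadcasts $(\langle\mathrm{AUX}[0](v_i)\rangle_i,\emptyset)$, then repeats forever: (1) $r_i:=r_i+1$; (2) if $i=r_i\bmod n$ (coordinator), run Broadcast; (3) start timer $2r_i$ and wait until it expires; (4) if $i\ne r_i\bmod n$, run Broadcast; (5) wait until $\mathit{aux\_values}_i$ contains round-$r_i$ AUX messages from $n-t$ different processes; (6) start timer $2r_i+1$ and wait until it expires; (7) with $b_i=r_i\bmod 2$, if $\mathit{aux\_values}_i$ contains $\mathrm{AUX}[r_i](b_i)$ from $n-t$ different processes, decide $b_i$ (if not yet decided). Broadcast: let $\mathit{values}_i$ be the set of $v\in\{0,1\}$ such that $\mathsf{is\_valid}(r_i,v,S)$ holds for some $S\subseteq\mathit{aux\_values}_i$; let $bv=(r_i+1)\bmod 2$; if $p_i$ received from $p_{r_i\bmod n}$ a message $(\langle\mathrm{AUX}[r_i](p)\rangle_{r_i\bmod n},\cdot)$ with $p\in\mathit{values}_i$ then $est_i:=p$, else if $bv\in\mathit{values}_i$ then $est_i:=bv$, else $est_i:=\neg bv$; choose $\mathit{proofs}\subseteq\mathit{aux\_values}_i$ with $\mathsf{is\_valid}(r_i,est_i,\mathit{proofs})$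 and broadcast $(\langle\mathrm{AUX}[r_i](est_i)\rangle_i,\mathit{proofs})$. On receiving $(\langle\mathrm{AUX}[r_j](est_j)\rangle_j,\mathit{proofs})$: if $\mathsf{is\_valid}(r_j,est_j,\mathit{proofs})$, add the signed message and the messages of $\mathit{proofs}$ needed to satisfy the predicate to $\mathit{aux\_values}_i$ (such messages are called valid). Then let $\rho_i$ be the largest round for which $\mathit{aux\_values}_i$ contains messages from $t+1$ different processes, and set every timer with index $\le 2\rho_i$ to expired. *)

theory Defs
  imports Main
begin

text \<open>Since signatures are
  unforgeable, a signed message is identified with (signer, round, value).
  Values 0/1 are natural numbers; messages with other values are malformed.\<close>
datatype auxm = Aux (sgn: nat) (rnd: nat) (vl: nat)

datatype nmsg = NMsg (msrc: nat) (mdst: nat) (sm: auxm) (proofs: "auxm set")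

definition senders :: "auxm set \<Rightarrow> nat \<Rightarrow> nat \<Rightarrow> nat set" where
  "senders S r v = {j. Aux j r v \<in> S}"

definition rsenders :: "auxm set \<Rightarrow> nat \<Rightarrow> nat set" where
  "rsenders S r = {j. \<exists>v. Aux j r v \<in> S}"

definition is_valid :: "nat \<Rightarrow> nat \<Rightarrow> nat \<Rightarrow> nat \<Rightarrow> auxm set \<Rightarrow> bool" where
  "is_valid n t r est S =
     (if r = 0 then True
      else if r = 1 then card (senders S 0 est) \<ge> t + 1
      else (let b = (r - 1) mod 2 in
            if est = b
            then (r = 2 \<and> card (senders S 0 b) \<ge> t + 1) \<or> card (senders S (r - 2) b) \<ge> n - t
            else card (senders S (r - 1) (1 - b)) \<ge> n - t))"

definition needed :: "nat \<Rightarrow> nat \<Rightarrow> auxm set \<Rightarrow> auxm set" where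
  "needed r est S =
     (if r = 0 then {}
      else if r = 1 then {m \<in> S. rnd m = 0 \<and> vl m = est}
      else (let b = (r - 1) mod 2 in
            if est = b then {m \<in> S. rnd m = r - 2 \<and> vl m = b}
            else {m \<in> S. rnd m = r - 1 \<and> vl m = 1 - b}))"

datatype pcv = PInit | P1 | P2 | P3 | P3w | P4 | P5 | P6 | P6w | P7
datatype tstate = NotStarted | Running | Expired

record lstate =
  l_pc :: pcv
  l_r :: nat
  l_aux :: "auxm set"
  l_tim :: "nat \<Rightarrow> tstate"
  l_rcvd :: "(nat \<times> auxm) set"   \<comment> \<open>(channel sender, signed message) of every received message\<close>
  l_est :: nat
  l_dec :: "nat option"

record config =
  cl :: "nat \<Rightarrow> lstate"
  transit :: "(nat \<times> nmsg) set"   \<comment> \<open>in-transit messages, tagged with their send step\<close>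
  sigs :: "auxm set"               \<comment> \<open>signed messages produced so far by non-faulty processes\<close>

definition coord :: "nat \<Rightarrow> nat \<Rightarrow> nat" where
  "coord n r = r mod n"

definition start_timer :: "(nat \<Rightarrow> tstate) \<Rightarrow> nat \<Rightarrow> (nat \<Rightarrow> tstate)" where
  "start_timer tm x = (if tm x = NotStarted then tm(x := Running) else tm)"

definition vals :: "nat \<Rightarrow> nat \<Rightarrow> nat \<Rightarrow> auxm set \<Rightarrow> nat set" where
  "vals n t r A = {v. v \<in> {0, 1} \<and> (\<exists>S \<subseteq> A. is_valid n t r v S)}"

text \<open>Choice of est in procedure Broadcast (nondeterministic if a faulty
  coordinator sent both values).\<close>
definition est_choice :: "nat \<Rightarrow> nat \<Rightarrow> lstate \<Rightarrow> nat \<Rightarrow> bool" where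
  "est_choice n t ls e =
     (let r = l_r ls; V = vals n t r (l_aux ls); bv = (r + 1) mod 2;
          c = coord n r;
          CP = {p \<in> V. (c, Aux c r p) \<in> l_rcvd ls}
      in if CP \<noteq> {} then e \<in> CP
         else if bv \<in> V then e = bv else e = 1 - bv)"

definition bcast :: "nat \<Rightarrow> nat \<Rightarrow> nat \<Rightarrow> lstate \<Rightarrow> lstate \<Rightarrow> nmsg set \<Rightarrow> bool" where
  "bcast n t i ls ls' M =
     (\<exists>e P. est_choice n t ls e \<and> P \<subseteq> l_aux ls \<and> is_valid n t (l_r ls) e P \<and>
            ls' = ls\<lparr>l_est := e\<rparr> \<and>
            M = {NMsg i d (Aux i (l_r ls) e) P | d. d \<in> {1..n}})"

text \<open>One local step of non-faulty process i (steps (1)--(7) of the loop,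
  and the initial broadcast); M is the set of messages sent.\<close>
definition lstep :: "nat \<Rightarrow> nat \<Rightarrow> (nat \<Rightarrow> nat) \<Rightarrow> nat \<Rightarrow> lstate \<Rightarrow> lstate \<Rightarrow> nmsg set \<Rightarrow> bool" where
  "lstep n t props i ls ls' M =
    (let r = l_r ls in
     (l_pc ls = PInit \<and> ls' = ls\<lparr>l_pc := P1\<rparr> \<and>
        M = {NMsg i d (Aux i 0 (props i)) {} | d. d \<in> {1..n}})
   \<or> (l_pc ls = P1 \<and> ls' = ls\<lparr>l_pc := P2, l_r := r + 1\<rparr> \<and> M = {})
   \<or> (l_pc ls = P2 \<and>
        (if i = coord n r then (\<exists>ls''. bcast n t i ls ls'' M \<and> ls' = ls''\<lparr>l_pc := P3\<rparr>)
         else ls' = ls\<lparr>l_pc := P3\<rparr> \<and> M = {}))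
   \<or> (l_pc ls = P3 \<and> ls' = ls\<lparr>l_pc := P3w, l_tim := start_timer (l_tim ls) (2 * r)\<rparr> \<and> M = {})
   \<or> (l_pc ls = P3w \<and> l_tim ls (2 * r) = Expired \<and> ls' = ls\<lparr>l_pc := P4\<rparr> \<and> M = {})
   \<or> (l_pc ls = P4 \<and>
        (if i \<noteq> coord n r then (\<exists>ls''. bcast n t i ls ls'' M \<and> ls' = ls''\<lparr>l_pc := P5\<rparr>)
         else ls' = ls\<lparr>l_pc := P5\<rparr> \<and> M = {}))
   \<or> (l_pc ls = P5 \<and> card (rsenders (l_aux ls) r) \<ge> n - t \<and> ls' = ls\<lparr>l_pc := P6\<rparr> \<and> M = {})
   \<or> (l_pc ls = P6 \<and> ls' = ls\<lparr>l_pc := P6w, l_tim := start_timer (l_tim ls) (2 * r + 1)\<rparr> \<and> M = {})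
   \<or> (l_pc ls = P6w \<and> l_tim ls (2 * r + 1) = Expired \<and> ls' = ls\<lparr>l_pc := P7\<rparr> \<and> M = {})
   \<or> (l_pc ls = P7 \<and> M = {} \<and>
        ls' = ls\<lparr>l_pc := P1,
                 l_dec := (if card (senders (l_aux ls) r (r mod 2)) \<ge> n - t \<and> l_dec ls = None
                           then Some (r mod 2) else l_dec ls)\<rparr>))"

definition well_formed :: "nat \<Rightarrow> nmsg \<Rightarrow> bool" where
  "well_formed n m = (vl (sm m) \<in> {0, 1} \<and> sgn (sm m) \<in> {1..n})"

definition recv_update :: "nat \<Rightarrow> nat \<Rightarrow> lstate \<Rightarrow> nmsg \<Rightarrow> lstate" where
  "recv_update n t ls m =
    (let a = sm m;
         A' = (if well_formed n m \<and> is_valid n t (rnd a) (vl a) (proofs m)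
               then l_aux ls \<union> {a} \<union> needed (rnd a) (vl a) (proofs m) else l_aux ls);
         R = {r. card (rsenders A' r) \<ge> t + 1}
     in ls\<lparr>l_aux := A',
           l_rcvd := insert (msrc m, a) (l_rcvd ls),
           l_tim := (\<lambda>x. if R \<noteq> {} \<and> x \<le> 2 * Max R then Expired else l_tim ls x)\<rparr>)"

datatype action = Loc nat | Rcv nat "nat \<times> nmsg" | TExp nat nat | Byz nat "nmsg set" | Idle

definition init_ls :: lstate where
  "init_ls = \<lparr>l_pc = PInit, l_r = 0, l_aux = {}, l_tim = (\<lambda>_. NotStarted),
              l_rcvd = {}, l_est = 0, l_dec = None\<rparr>"

definition init_cfg :: config where
  "init_cfg = \<lparr>cl = (\<lambda>_. init_ls), transit = {}, sigs = {}\<rparr>"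

definition step :: "nat \<Rightarrow> nat \<Rightarrow> nat set \<Rightarrow> (nat \<Rightarrow> nat) \<Rightarrow> nat \<Rightarrow> action \<Rightarrow> config \<Rightarrow> config \<Rightarrow> bool" where
  "step n t F props k a c c' =
    (case a of
       Loc i \<Rightarrow> i \<in> {1..n} - F \<and>
         (\<exists>ls' M. lstep n t props i (cl c i) ls' M \<and>
            c' = c\<lparr>cl := (cl c)(i := ls'), transit := transit c \<union> Pair k ` M,
                   sigs := sigs c \<union> sm ` M\<rparr>)
     | Rcv i x \<Rightarrow> i \<in> {1..n} - F \<and> x \<in> transit c \<and> mdst (snd x) = i \<and>
         c' = c\<lparr>cl := (cl c)(i := recv_update n t (cl c i) (snd x)), transit := transit c - {x}\<rparr>
     | TExp i y \<Rightarrow> i \<in> {1..n} - F \<and> l_tim (cl c i) y = Running \<and>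
         c' = c\<lparr>cl := (cl c)(i := (cl c i)\<lparr>l_tim := (l_tim (cl c i))(y := Expired)\<rparr>)\<rparr>
     | Byz j M \<Rightarrow> j \<in> F \<and> finite M \<and>
         (\<forall>m \<in> M. msrc m = j \<and> mdst m \<in> {1..n} \<and> finite (proofs m) \<and>
            (\<forall>a \<in> insert (sm m) (proofs m). sgn a \<in> {1..n} \<and> (sgn a \<notin> F \<longrightarrow> a \<in> sigs c))) \<and>
         c' = c\<lparr>transit := transit c \<union> Pair k ` M\<rparr>
     | Idle \<Rightarrow> c' = c)"

definition enabled :: "nat \<Rightarrow> nat \<Rightarrow> (nat \<Rightarrow> nat) \<Rightarrow> nat \<Rightarrow> lstate \<Rightarrow> bool" where
  "enabled n t props i ls = (\<exists>ls' M. lstep n t props i ls ls' M)"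

definition execution :: "nat \<Rightarrow> nat \<Rightarrow> nat set \<Rightarrow> (nat \<Rightarrow> nat) \<Rightarrow> (nat \<Rightarrow> config) \<Rightarrow> (nat \<Rightarrow> action) \<Rightarrow> bool" where
  "execution n t F props cfg act =
    (cfg 0 = init_cfg \<and>
     (\<forall>k. step n t F props k (act k) (cfg k) (cfg (Suc k))) \<and>
     \<comment> \<open>reliable channels: every message to a non-faulty process is eventually received\<close>
     (\<forall>k x. x \<in> transit (cfg k) \<and> mdst (snd x) \<in> {1..n} - F \<longrightarrow>
            (\<exists>k' \<ge> k. act k' = Rcv (mdst (snd x)) x)) \<and>
     \<comment> \<open>weak fairness of local steps of non-faulty processes\<close>
     (\<forall>k i. i \<in> {1..n} - F \<and> (\<forall>k' \<ge> k. enabled n t props i (cl (cfg k') i)) \<longrightarrow>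
            (\<exists>k' \<ge> k. act k' = Loc i)) \<and>
     \<comment> \<open>every started timer eventually expires\<close>
     (\<forall>k i y. i \<in> {1..n} - F \<and> l_tim (cl (cfg k) i) y = Running \<longrightarrow>
            (\<exists>k' \<ge> k. l_tim (cl (cfg k') i) y = Expired)))"

end

theory Submission
  imports Defs
begin

lemma bcast_facts0:
  assumes "bcast n t i ls ls' M"
  shows "l_aux ls' = l_aux ls \<and> l_tim ls' = l_tim ls \<and> (\<forall>m\<in>M. proofs m \<subseteq> l_aux ls)"
  using assms unfolding bcast_def by auto

lemma lstep_facts:
  assumes "lstep n t props i ls ls' M"
  shows "l_aux ls' = l_aux ls \<and> (\<forall>m\<in>M. proofs m \<subseteq> l_aux ls) \<and>
     (\<forall>y. l_tim ls y = Expired \<longrightarrow> l_tim ls' y = Expired) \<and>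
     (\<forall>y. l_tim ls y \<noteq> NotStarted \<longrightarrow> l_tim ls' y \<noteq> NotStarted)"
proof (cases "l_pc ls")
  case P2 then show ?thesis using assms bcast_facts0[of n t i ls] unfolding lstep_def Let_def
    by (auto split: if_splits)
next
  case P4 then show ?thesis using assms bcast_facts0[of n t i ls] unfolding lstep_def Let_def
    by (auto split: if_splits)
qed (use assms in \<open>auto simp: lstep_def Let_def start_timer_def\<close>)

lemma est_choice_01: assumes "est_choice n t ls e" shows "e \<in> {0,1}"
proof -
  let ?V = "vals n t (l_r ls) (l_aux ls)"
  have V: "?V \<subseteq> {0,1}" unfolding vals_def by auto
  have "e \<in> ?V \<or> e = (l_r ls + 1) mod 2 \<or> e = 1 - (l_r ls + 1) mod 2"
    using assms unfolding est_choice_def Let_def by (smt (verit) mem_Collect_eq)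
  then show ?thesis using V by auto
qed

lemma bcast_facts:
  assumes "bcast n t i ls ls' M"
  shows "\<exists>e P. e \<in> {0,1} \<and> is_valid n t (l_r ls) e P \<and> l_pc ls' = l_pc ls \<and> l_r ls' = l_r ls \<and>
     l_tim ls' = l_tim ls \<and> M = {NMsg i d (Aux i (l_r ls) e) P | d. d \<in> {1..n}}"
proof -
  from assms obtain e P where "est_choice n t ls e" "is_valid n t (l_r ls) e P" "ls' = ls\<lparr>l_est := e\<rparr>"
    "M = {NMsg i d (Aux i (l_r ls) e) P | d. d \<in> {1..n}}" unfolding bcast_def by blast
  moreover have "e \<in> {0,1}" using est_choice_01 calculation(1) by blast
  ultimately show ?thesis by auto
qed

lemma bcast_exists:
  assumes "vals n t (l_r ls) (l_aux ls) \<noteq> {}"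
  shows "\<exists>ls' M. bcast n t i ls ls' M"
proof -
  let ?V = "vals n t (l_r ls) (l_aux ls)"
  let ?bv = "(l_r ls + 1) mod 2"
  let ?c = "coord n (l_r ls)"
  let ?CP = "{p \<in> ?V. (?c, Aux ?c (l_r ls) p) \<in> l_rcvd ls}"
  have V01: "?V \<subseteq> {0,1}" unfolding vals_def by auto
  have "\<exists>e. est_choice n t ls e \<and> e \<in> ?V"
  proof (cases "?CP \<noteq> {}")
    case True
    then obtain e where "e \<in> ?CP" by blast
    then show ?thesis using True unfolding est_choice_def Let_def by auto
  next
    case False
    show ?thesis
    proof (cases "?bv \<in> ?V")
      case True
      have "est_choice n t ls ?bv" using False True unfolding est_choice_def Let_def by simp
      then show ?thesis using True by blast
    next
      case F2: False
      have "?bv = 0 \<or> ?bv = 1" by auto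
      moreover obtain x where "x \<in> ?V" using assms by blast
      ultimately have "1 - ?bv \<in> ?V" using V01 F2 by (metis diff_self_eq_0 diff_zero insertE singletonD subsetD)
      moreover have "est_choice n t ls (1 - ?bv)" using False F2 unfolding est_choice_def Let_def by simp
      ultimately show ?thesis by blast
    qed
  qed
  then obtain e where e: "est_choice n t ls e" and eV: "e \<in> ?V" by blast
  from eV obtain P where "P \<subseteq> l_aux ls" "is_valid n t (l_r ls) e P" unfolding vals_def by auto
  then show ?thesis using e unfolding bcast_def by blast
qed


lemma recv_facts:
  "l_aux ls \<subseteq> l_aux (recv_update n t ls m) \<and>
   l_pc (recv_update n t ls m) = l_pc ls \<and> l_r (recv_update n t ls m) = l_r ls \<and>
   (\<forall>y. l_tim ls y = Expired \<longrightarrow> l_tim (recv_update n t ls m) y = Expired) \<and>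
   (\<forall>y. l_tim ls y \<noteq> NotStarted \<longrightarrow> l_tim (recv_update n t ls m) y \<noteq> NotStarted)"
  unfolding recv_update_def Let_def by auto

lemma recv_aux:
  "well_formed n m \<Longrightarrow> is_valid n t (rnd (sm m)) (vl (sm m)) (proofs m) \<Longrightarrow>
   l_aux (recv_update n t ls m) = l_aux ls \<union> {sm m} \<union> needed (rnd (sm m)) (vl (sm m)) (proofs m)"
  unfolding recv_update_def Let_def by auto

lemma recv_aux_sub:
  "l_aux (recv_update n t ls m) \<subseteq> l_aux ls \<union> {sm m} \<union> proofs m \<and>
   (l_aux (recv_update n t ls m) \<noteq> l_aux ls \<longrightarrow> well_formed n m)"
  unfolding recv_update_def Let_def needed_def by auto


locale ex =
  fixes n t :: nat and F :: "nat set" and props :: "nat \<Rightarrow> nat"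
    and cfg :: "nat \<Rightarrow> config" and act :: "nat \<Rightarrow> action"
  assumes nt: "3 * t < n" and FS: "F \<subseteq> {1..n}" and cF: "card F \<le> t"
    and pr: "\<forall>j \<in> {1..n}. props j \<in> {0, 1}"
    and ex: "execution n t F props cfg act"
begin

abbreviation "C \<equiv> {1..n} - F"
abbreviation "aux k j \<equiv> l_aux (cl (cfg k) j)"
abbreviation "pcr k j \<equiv> (l_pc (cl (cfg k) j), l_r (cl (cfg k) j))"
abbreviation "tim k j \<equiv> l_tim (cl (cfg k) j)"

lemma stp: "step n t F props k (act k) (cfg k) (cfg (Suc k))"
  using ex unfolding execution_def by blast

lemma cfg0: "cfg 0 = init_cfg" using ex unfolding execution_def by blast

lemma reliable: "x \<in> transit (cfg k) \<Longrightarrow> mdst (snd x) \<in> C \<Longrightarrow> \<exists>k' \<ge> k. act k' = Rcv (mdst (snd x)) x"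
  using ex unfolding execution_def by blast

lemma fair: "i \<in> C \<Longrightarrow> (\<forall>k' \<ge> k. enabled n t props i (cl (cfg k') i)) \<Longrightarrow> \<exists>k' \<ge> k. act k' = Loc i"
  using ex unfolding execution_def by blast

lemma timer_fair: "i \<in> C \<Longrightarrow> tim k i y = Running \<Longrightarrow> \<exists>k' \<ge> k. tim k' i y = Expired"
  using ex unfolding execution_def by blast

lemma C_fin: "finite C" by simp

lemma C_card: "card C \<ge> n - t"
proof -
  have "card C = n - card F" using FS by (simp add: card_Diff_subset finite_subset)
  then show ?thesis using cF by simp
qed

lemma loc_step: "act k = Loc j \<Longrightarrow> j \<in> C \<and> (\<exists>ls' M. lstep n t props j (cl (cfg k) j) ls' M \<and>
   cl (cfg (Suc k)) j = ls' \<and> transit (cfg (Suc k)) = transit (cfg k) \<union> Pair k ` M)"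
  using stp[of k] unfolding step_def by auto

lemma rcv_step: "act k = Rcv i x \<Longrightarrow> i \<in> C \<and> x \<in> transit (cfg k) \<and>
   cl (cfg (Suc k)) i = recv_update n t (cl (cfg k) i) (snd x)"
  using stp[of k] unfolding step_def by auto

lemma one_step:
  "aux k j \<subseteq> aux (Suc k) j \<and> (tim k j y = Expired \<longrightarrow> tim (Suc k) j y = Expired) \<and>
   (tim k j y \<noteq> NotStarted \<longrightarrow> tim (Suc k) j y \<noteq> NotStarted) \<and>
   (act k \<noteq> Loc j \<longrightarrow> pcr (Suc k) j = pcr k j)"
proof (cases "act k")
  case (Loc i)
  show ?thesis
  proof (cases "i = j")
    case True
    then show ?thesis using loc_step[OF Loc] lstep_facts Loc by (metis order_refl)
  next
    case False
    then show ?thesis using stp[of k] Loc unfolding step_def by auto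
  qed
next
  case (Rcv i x)
  then show ?thesis using stp[of k] recv_facts unfolding step_def by (cases "i = j") auto
next
  case (TExp i y)
  then show ?thesis using stp[of k] unfolding step_def by (cases "i = j") auto
next
  case (Byz i M) then show ?thesis using stp[of k] unfolding step_def by auto
next
  case Idle then show ?thesis using stp[of k] unfolding step_def by auto
qed

lemma aux_mono: "k \<le> k' \<Longrightarrow> aux k j \<subseteq> aux k' j"
  by (induction k' rule: dec_induct) (use one_step in blast)+

lemma exp_mono: "k \<le> k' \<Longrightarrow> tim k j y = Expired \<Longrightarrow> tim k' j y = Expired"
  by (induction k' rule: dec_induct) (use one_step in blast)+

lemma ns_mono: "k \<le> k' \<Longrightarrow> tim k j y \<noteq> NotStarted \<Longrightarrow> tim k' j y \<noteq> NotStarted"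
  by (induction k' rule: dec_induct) (use one_step in blast)+

lemma timer_eventually: "j \<in> C \<Longrightarrow> tim k j y \<noteq> NotStarted \<Longrightarrow> \<exists>k1. \<forall>k' \<ge> k1. tim k' j y = Expired"
proof -
  assume j: "j \<in> C" and ns: "tim k j y \<noteq> NotStarted"
  have "\<exists>k2. tim k2 j y = Expired"
  proof (cases "tim k j y")
    case Running then show ?thesis using timer_fair[OF j] by blast
  qed (use ns in auto)
  then show ?thesis using exp_mono by blast
qed

definition Inv :: "config \<Rightarrow> bool" where
  "Inv c = ((\<forall>j a. a \<in> l_aux (cl c j) \<longrightarrow> sgn a \<in> {1..n}) \<and>
            (\<forall>x\<in>transit c. \<forall>a\<in>proofs (snd x). sgn a \<in> {1..n}))"

lemma Inv_all: "Inv (cfg k)"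
proof (induction k)
  case 0 then show ?case using cfg0 unfolding Inv_def init_cfg_def init_ls_def by auto
next
  case (Suc k)
  show ?case
  proof (cases "act k")
    case (Loc i)
    from loc_step[OF this] obtain ls' M where l: "lstep n t props i (cl (cfg k) i) ls' M"
      "cl (cfg (Suc k)) i = ls'" "transit (cfg (Suc k)) = transit (cfg k) \<union> Pair k ` M" by blast
    have "cl (cfg (Suc k)) j = cl (cfg k) j" if "j \<noteq> i" for j
      using stp[of k] Loc that unfolding step_def by auto
    then show ?thesis using Suc l lstep_facts[OF l(1)] unfolding Inv_def
      by (smt (verit, ccfv_threshold) Un_iff imageE snd_conv subsetD)
  next
    case (Rcv i x)
    have "cl (cfg (Suc k)) j = cl (cfg k) j" if "j \<noteq> i" for j
      using stp[of k] Rcv that unfolding step_def by auto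
    moreover have "transit (cfg (Suc k)) \<subseteq> transit (cfg k)" using stp[of k] Rcv unfolding step_def by auto
    moreover note rcv_step[OF Rcv] recv_aux_sub[of n t "cl (cfg k) i" "snd x"]
    ultimately show ?thesis using Suc unfolding Inv_def well_formed_def
      by (smt (verit, best) Un_iff insert_iff singletonD subset_iff)
  next
    case (TExp i y)
    then show ?thesis using stp[of k] Suc unfolding step_def Inv_def by auto
  next
    case (Byz i M) then show ?thesis using stp[of k] Suc unfolding step_def Inv_def by auto
  next
    case Idle then show ?thesis using stp[of k] Suc unfolding step_def by auto
  qed
qed

lemma aux_sgn: "a \<in> aux k j \<Longrightarrow> sgn a \<in> {1..n}"
  using Inv_all[of k] unfolding Inv_def by blast

end


lemma en_simple: "l_pc ls \<in> {PInit, P1, P3, P6, P7} \<Longrightarrow> enabled n t props i ls"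
proof -
  assume a: "l_pc ls \<in> {PInit, P1, P3, P6, P7}"
  show ?thesis unfolding enabled_def
  proof (cases "l_pc ls")
    case PInit show "\<exists>ls' M. lstep n t props i ls ls' M"
      by (rule exI[of _ "ls\<lparr>l_pc := P1\<rparr>"], rule exI[of _ "{NMsg i d (Aux i 0 (props i)) {} | d. d \<in> {1..n}}"])
        (simp add: lstep_def PInit)
  next
    case P1 show "\<exists>ls' M. lstep n t props i ls ls' M"
      by (rule exI[of _ "ls\<lparr>l_pc := P2, l_r := l_r ls + 1\<rparr>"], rule exI[of _ "{}"]) (simp add: lstep_def P1)
  next
    case P3 show "\<exists>ls' M. lstep n t props i ls ls' M"
      by (rule exI[of _ "ls\<lparr>l_pc := P3w, l_tim := start_timer (l_tim ls) (2 * l_r ls)\<rparr>"], rule exI[of _ "{}"]) (simp add: lstep_def P3)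
  next
    case P6 show "\<exists>ls' M. lstep n t props i ls ls' M"
      by (rule exI[of _ "ls\<lparr>l_pc := P6w, l_tim := start_timer (l_tim ls) (2 * l_r ls + 1)\<rparr>"], rule exI[of _ "{}"]) (simp add: lstep_def P6)
  next
    case P7 show "\<exists>ls' M. lstep n t props i ls ls' M"
      by (rule exI[of _ "ls\<lparr>l_pc := P1,
                 l_dec := (if card (senders (l_aux ls) (l_r ls) (l_r ls mod 2)) \<ge> n - t \<and> l_dec ls = None
                           then Some (l_r ls mod 2) else l_dec ls)\<rparr>"], rule exI[of _ "{}"]) (simp add: lstep_def P7)
  qed (use a in auto)
qed

lemma en_P2: "l_pc ls = P2 \<Longrightarrow> (i = coord n (l_r ls) \<longrightarrow> vals n t (l_r ls) (l_aux ls) \<noteq> {}) \<Longrightarrow> enabled n t props i ls"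
proof -
  assume a: "l_pc ls = P2" "i = coord n (l_r ls) \<longrightarrow> vals n t (l_r ls) (l_aux ls) \<noteq> {}"
  show ?thesis
  proof (cases "i = coord n (l_r ls)")
    case True
    then obtain ls'' M where "bcast n t i ls ls'' M" using a bcast_exists by blast
    then have "lstep n t props i ls (ls''\<lparr>l_pc := P3\<rparr>) M" using a True unfolding lstep_def Let_def by auto
    then show ?thesis unfolding enabled_def by blast
  next
    case False
    then have "lstep n t props i ls (ls\<lparr>l_pc := P3\<rparr>) {}" using a unfolding lstep_def Let_def by auto
    then show ?thesis unfolding enabled_def by blast
  qed
qed

lemma en_P4: "l_pc ls = P4 \<Longrightarrow> (i \<noteq> coord n (l_r ls) \<longrightarrow> vals n t (l_r ls) (l_aux ls) \<noteq> {}) \<Longrightarrow> enabled n t props i ls"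
proof -
  assume a: "l_pc ls = P4" "i \<noteq> coord n (l_r ls) \<longrightarrow> vals n t (l_r ls) (l_aux ls) \<noteq> {}"
  show ?thesis
  proof (cases "i = coord n (l_r ls)")
    case False
    then obtain ls'' M where "bcast n t i ls ls'' M" using a bcast_exists by blast
    then have "lstep n t props i ls (ls''\<lparr>l_pc := P5\<rparr>) M" using a False unfolding lstep_def Let_def by auto
    then show ?thesis unfolding enabled_def by blast
  next
    case True
    then have "lstep n t props i ls (ls\<lparr>l_pc := P5\<rparr>) {}" using a unfolding lstep_def Let_def by auto
    then show ?thesis unfolding enabled_def by blast
  qed
qed

lemma en_P3w: "l_pc ls = P3w \<Longrightarrow> l_tim ls (2 * l_r ls) = Expired \<Longrightarrow> enabled n t props i ls"
  unfolding enabled_def by (rule exI[of _ "ls\<lparr>l_pc := P4\<rparr>"], rule exI[of _ "{}"]) (simp add: lstep_def)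

lemma en_P6w: "l_pc ls = P6w \<Longrightarrow> l_tim ls (2 * l_r ls + 1) = Expired \<Longrightarrow> enabled n t props i ls"
  unfolding enabled_def by (rule exI[of _ "ls\<lparr>l_pc := P7\<rparr>"], rule exI[of _ "{}"]) (simp add: lstep_def)

lemma en_P5: "l_pc ls = P5 \<Longrightarrow> card (rsenders (l_aux ls) (l_r ls)) \<ge> n - t \<Longrightarrow> enabled n t props i ls"
  unfolding enabled_def by (rule exI[of _ "ls\<lparr>l_pc := P6\<rparr>"], rule exI[of _ "{}"]) (simp add: lstep_def)


definition BCm :: "nat \<Rightarrow> nat \<Rightarrow> nat \<Rightarrow> nat \<Rightarrow> nat \<Rightarrow> (nat \<times> nmsg) set \<Rightarrow> bool" where
  "BCm n t k j q T = (\<exists>e P. e \<in> {0,1} \<and> is_valid n t q e P \<and>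
      (\<forall>d\<in>{1..n}. (k, NMsg j d (Aux j q e) P) \<in> T))"

lemma ls_next:
  assumes "lstep n t props j ls ls' M" "T' = T \<union> Pair k ` M" "l_r ls = q"
  shows "(l_pc ls = PInit \<longrightarrow> (l_pc ls', l_r ls') = (P1, q) \<and> M = {NMsg j d (Aux j 0 (props j)) {} | d. d \<in> {1..n}}) \<and>
    (l_pc ls = P1 \<longrightarrow> (l_pc ls', l_r ls') = (P2, Suc q)) \<and>
    (l_pc ls = P2 \<longrightarrow> (l_pc ls', l_r ls') = (P3, q) \<and> (j = coord n q \<longrightarrow> BCm n t k j q T')) \<and>
    (l_pc ls = P3 \<longrightarrow> (l_pc ls', l_r ls') = (P3w, q) \<and> l_tim ls' (2*q) \<noteq> NotStarted) \<and>
    (l_pc ls = P3w \<longrightarrow> (l_pc ls', l_r ls') = (P4, q)) \<and>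
    (l_pc ls = P4 \<longrightarrow> (l_pc ls', l_r ls') = (P5, q) \<and> (j \<noteq> coord n q \<longrightarrow> BCm n t k j q T')) \<and>
    (l_pc ls = P5 \<longrightarrow> (l_pc ls', l_r ls') = (P6, q)) \<and>
    (l_pc ls = P6 \<longrightarrow> (l_pc ls', l_r ls') = (P6w, q) \<and> l_tim ls' (2*q+1) \<noteq> NotStarted) \<and>
    (l_pc ls = P6w \<longrightarrow> (l_pc ls', l_r ls') = (P7, q)) \<and>
    (l_pc ls = P7 \<longrightarrow> (l_pc ls', l_r ls') = (P1, q))"
proof (cases "l_pc ls")
  case P2
  show ?thesis
  proof (cases "j = coord n q")
    case True
    then obtain ls'' where b: "bcast n t j ls ls'' M" "ls' = ls''\<lparr>l_pc := P3\<rparr>"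
      using assms P2 unfolding lstep_def Let_def by auto
    from bcast_facts[OF b(1)] obtain e P where "e \<in> {0,1}" "is_valid n t q e P" "l_r ls'' = q"
      "M = {NMsg j d (Aux j q e) P | d. d \<in> {1..n}}" using assms by auto
    note eP = this
    have "\<forall>d\<in>{1..n}. (k, NMsg j d (Aux j q e) P) \<in> T'" using assms(2) eP(4) by auto
    then have "BCm n t k j q T'" using eP(1,2) unfolding BCm_def by blast
    moreover have "(l_pc ls', l_r ls') = (P3, q)" using b eP(3) by simp
    ultimately show ?thesis using P2 True by simp
  next
    case False
    then show ?thesis using assms P2 unfolding lstep_def Let_def by auto
  qed
next
  case P4
  show ?thesis
  proof (cases "j = coord n q")
    case False
    then obtain ls'' where b: "bcast n t j ls ls'' M" "ls' = ls''\<lparr>l_pc := P5\<rparr>"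
      using assms P4 unfolding lstep_def Let_def by auto
    from bcast_facts[OF b(1)] obtain e P where "e \<in> {0,1}" "is_valid n t q e P" "l_r ls'' = q"
      "M = {NMsg j d (Aux j q e) P | d. d \<in> {1..n}}" using assms by auto
    note eP = this
    have "\<forall>d\<in>{1..n}. (k, NMsg j d (Aux j q e) P) \<in> T'" using assms(2) eP(4) by auto
    then have "BCm n t k j q T'" using eP(1,2) unfolding BCm_def by blast
    moreover have "(l_pc ls', l_r ls') = (P5, q)" using b eP(3) by simp
    ultimately show ?thesis using P4 False by simp
  next
    case True
    then show ?thesis using assms P4 unfolding lstep_def Let_def by auto
  qed
qed (use assms in \<open>auto simp: lstep_def Let_def start_timer_def\<close>)


lemma fin_combine:
  fixes P :: "'a \<Rightarrow> nat \<Rightarrow> bool"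
  assumes "finite A" "\<forall>j\<in>A. \<exists>k. P j k" "\<And>j k k'. P j k \<Longrightarrow> k \<le> k' \<Longrightarrow> P j k'"
  shows "\<exists>K. \<forall>j\<in>A. P j K"
  using assms(1,2)
proof (induction A rule: finite_induct)
  case empty then show ?case by simp
next
  case (insert x F)
  then obtain K where K: "\<forall>j\<in>F. P j K" by blast
  obtain k where k: "P x k" using insert.prems by blast
  have "\<forall>j\<in>F. P j (max K k)"
  proof
    fix j assume "j \<in> F"
    then have "P j K" using K by blast
    then show "P j (max K k)" using assms(3)[of j K "max K k"] by simp
  qed
  moreover have "P x (max K k)" using k assms(3)[of x k "max K k"] by simp
  ultimately show ?case by blast
qed

lemma vals_mono: "A \<subseteq> B \<Longrightarrow> vals n t q A \<subseteq> vals n t q B"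
  unfolding vals_def by blast

lemma card_split:
  fixes C :: "nat set"
  assumes "finite C" "C \<subseteq> C0 \<union> C1" "C0 \<subseteq> C" "C1 \<subseteq> C" "card C \<ge> 2 * t + 1"
  shows "card C0 \<ge> t + 1 \<or> card C1 \<ge> t + 1"
proof -
  have f: "finite (C0 \<union> C1)" using assms(1,3,4) by (meson finite_Un finite_subset)
  have "card C \<le> card (C0 \<union> C1)" using assms(2) f by (rule card_mono[rotated])
  also have "\<dots> \<le> card C0 + card C1" by (rule card_Un_le)
  finally have "2 * t + 1 \<le> card C0 + card C1" using assms(5) by linarith
  then show ?thesis by linarith
qed

lemma mod_ne: assumes "(q::nat) \<ge> 3" shows "(q - 2) mod 2 \<noteq> (q - 1) mod 2"
proof -
  define m where "m = q - 3"
  have q: "q = m + 3" using assms m_def by simp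
  have "(m + 1) mod 2 \<noteq> (m + 2) mod 2" by (simp add: mod_Suc)
  then show ?thesis using q by (simp add: numeral_3_eq_3 numeral_2_eq_2)
qed

lemma vals_from:
  fixes C :: "nat set"
  assumes "3 * t < n" "finite C" "card C \<ge> n - t" "q \<ge> 1"
    and H: "\<forall>j\<in>C. \<exists>e P. e \<in> {0,1} \<and> is_valid n t (q-1) e P \<and> Aux j (q-1) e \<in> A \<and> needed (q-1) e P \<subseteq> A"
  shows "vals n t q A \<noteq> {}"
proof (cases "q = 1")
  case True
  let ?C0 = "{j\<in>C. Aux j 0 0 \<in> A}" and ?C1 = "{j\<in>C. Aux j 0 1 \<in> A}"
  have "C \<subseteq> ?C0 \<union> ?C1"
  proof
    fix j assume "j \<in> C"
    then obtain e P where "e \<in> {0,1}" "Aux j (q-1) e \<in> A" using H by blast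
    then have "e \<in> {0,1}" "Aux j 0 e \<in> A" using True by simp_all
    then show "j \<in> ?C0 \<union> ?C1" using \<open>j \<in> C\<close> by auto
  qed
  moreover have "n - t \<ge> 2 * t + 1" using assms(1) by simp
  then have "card C \<ge> 2 * t + 1" using assms(3) by (rule le_trans)
  ultimately have "card ?C0 \<ge> t + 1 \<or> card ?C1 \<ge> t + 1" using card_split[OF assms(2), of ?C0 ?C1 t] by auto
  then obtain v where v: "v \<in> {0,1}" "card {j\<in>C. Aux j 0 v \<in> A} \<ge> t + 1"
  proof
    assume "card ?C0 \<ge> t + 1" then show thesis using that[of 0] by simp
  next
    assume "card ?C1 \<ge> t + 1" then show thesis using that[of 1] by simp
  qed
  let ?S = "{Aux j 0 v | j. j \<in> C \<and> Aux j 0 v \<in> A}"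
  have "senders ?S 0 v = {j\<in>C. Aux j 0 v \<in> A}" unfolding senders_def by auto
  then have "is_valid n t 1 v ?S" using v unfolding is_valid_def by simp
  moreover have "?S \<subseteq> A" by auto
  ultimately show ?thesis using v True unfolding vals_def by blast
next
  case False
  then have q2: "q \<ge> 2" using assms(4) by auto
  define b where "b = (q - 1) mod 2"
  have b01: "b = 0 \<or> b = 1" unfolding b_def by auto
  show ?thesis
  proof (cases "\<exists>P. is_valid n t (q-1) b P \<and> needed (q-1) b P \<subseteq> A")
    case True
    then obtain P where P: "is_valid n t (q-1) b P" "needed (q-1) b P \<subseteq> A" by blast
    show ?thesis
    proof (cases "q = 2")
      case True
      have b1: "b = 1" using True unfolding b_def by simp
      have iv: "card (senders P 0 b) \<ge> t + 1" using P(1) True unfolding is_valid_def by simp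
      have ne: "needed (q-1) b P = {m \<in> P. rnd m = 0 \<and> vl m = b}" using True unfolding needed_def by simp
      have "senders (needed (q-1) b P) 0 b = senders P 0 b" using ne unfolding senders_def by auto
      then have "is_valid n t q b (needed (q-1) b P)" using iv True b1 unfolding is_valid_def by simp
      then show ?thesis using P(2) b01 unfolding vals_def by blast
    next
      case False
      then have q3: "q \<ge> 3" using q2 by auto
      have bb: "(q - 2) mod 2 \<noteq> b" unfolding b_def using mod_ne[OF q3] .
      have bb2: "1 - (q - 2) mod 2 = b" using bb b01 by auto
      have qq: "q - 1 - 1 = q - 2" "q - 1 \<noteq> 0" "q - 1 \<noteq> 1" using q3 by auto
      have iv: "card (senders P (q-2) b) \<ge> n - t" using P(1) bb bb2 qq unfolding is_valid_def Let_def
        by simp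
      have ne: "needed (q-1) b P = {m \<in> P. rnd m = q - 2 \<and> vl m = b}" using bb bb2 qq unfolding needed_def Let_def
        by simp
      have "senders (needed (q-1) b P) (q-2) b = senders P (q-2) b" using ne unfolding senders_def by auto
      moreover have "q \<noteq> 0" "q \<noteq> 1" using q3 by auto
      ultimately have "is_valid n t q b (needed (q-1) b P)" using iv unfolding is_valid_def Let_def b_def by simp
      then show ?thesis using P(2) b01 unfolding vals_def by blast
    qed
  next
    case False
    have all: "\<forall>j\<in>C. Aux j (q-1) (1-b) \<in> A"
    proof
      fix j assume "j \<in> C"
      then obtain e P where eP: "e \<in> {0,1}" "is_valid n t (q-1) e P" "Aux j (q-1) e \<in> A" "needed (q-1) e P \<subseteq> A"
        using H by blast
      have "e \<noteq> b" using False eP by blast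
      then have "e = 1 - b" using eP(1) b01 by auto
      then show "Aux j (q-1) (1-b) \<in> A" using eP(3) by simp
    qed
    let ?S = "{Aux j (q-1) (1-b) | j. j \<in> C}"
    have se: "senders ?S (q-1) (1-b) = C" unfolding senders_def by auto
    have "1 - b \<noteq> b" using b01 by auto
    moreover have "q \<noteq> 0" "q \<noteq> 1" using q2 by auto
    ultimately have "is_valid n t q (1-b) ?S" using assms(3) se unfolding is_valid_def Let_def b_def[symmetric]
      by simp
    moreover have "?S \<subseteq> A" using all by auto
    moreover have "1 - b \<in> {0,1}" using b01 by auto
    ultimately show ?thesis unfolding vals_def by blast
  qed
qed


context ex begin

lemma noloc: "k \<le> k' \<Longrightarrow> (\<forall>m. k \<le> m \<and> m < k' \<longrightarrow> act m \<noteq> Loc j) \<longrightarrow> pcr k' j = pcr k j"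
proof (induction k' rule: dec_induct)
  case base then show ?case by simp
next
  case (step m)
  show ?case
  proof
    assume a: "\<forall>m'. k \<le> m' \<and> m' < Suc m \<longrightarrow> act m' \<noteq> Loc j"
    then have "pcr m j = pcr k j" using step by auto
    moreover have "act m \<noteq> Loc j" using a step by auto
    ultimately show "pcr (Suc m) j = pcr k j" using one_step[of m j] by simp
  qed
qed

lemma leave:
  assumes j: "j \<in> C" and s: "pcr k j = s"
    and en: "\<exists>k1. \<forall>k'\<ge>k1. pcr k' j = s \<longrightarrow> enabled n t props j (cl (cfg k') j)"
  shows "\<exists>k'. act k' = Loc j \<and> pcr k' j = s"
proof (cases "\<exists>m. k \<le> m \<and> act m = Loc j")
  case True
  define m where "m = (LEAST m. k \<le> m \<and> act m = Loc j)"
  have m: "k \<le> m \<and> act m = Loc j" unfolding m_def using LeastI_ex[OF True] .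
  have "\<forall>m'. k \<le> m' \<and> m' < m \<longrightarrow> act m' \<noteq> Loc j"
    unfolding m_def using not_less_Least by blast
  then have "pcr m j = pcr k j" using noloc m by blast
  then show ?thesis using m s by auto
next
  case False
  then have st: "\<forall>k'\<ge>k. pcr k' j = s" using noloc s by auto
  obtain k1 where k1: "\<forall>k'\<ge>k1. pcr k' j = s \<longrightarrow> enabled n t props j (cl (cfg k') j)" using en by blast
  have "\<forall>k'\<ge>max k k1. enabled n t props j (cl (cfg k') j)" using st k1 by auto
  then obtain k' where "k' \<ge> max k k1" "act k' = Loc j" using fair[OF j] by blast
  then show ?thesis using False by auto
qed

lemma next_gen: "act k = Loc j \<Longrightarrow> \<exists>M. lstep n t props j (cl (cfg k) j) (cl (cfg (Suc k)) j) M \<and>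
    transit (cfg (Suc k)) = transit (cfg k) \<union> Pair k ` M"
  using loc_step by blast

lemmas nx = ls_next[OF _ _ refl]

lemma next_PInit: "act k = Loc j \<Longrightarrow> pcr k j = (PInit, q) \<Longrightarrow>
   pcr (Suc k) j = (P1, q) \<and> BCm n t k j 0 (transit (cfg (Suc k)))"
proof -
  assume a: "act k = Loc j" "pcr k j = (PInit, q)"
  then obtain M where M: "lstep n t props j (cl (cfg k) j) (cl (cfg (Suc k)) j) M"
    "transit (cfg (Suc k)) = transit (cfg k) \<union> Pair k ` M" using next_gen by blast
  have jC: "j \<in> C" using loc_step a(1) by blast
  have r: "pcr (Suc k) j = (P1, q)" "M = {NMsg j d (Aux j 0 (props j)) {} | d. d \<in> {1..n}}"
    using nx[OF M] a(2) by auto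
  have "props j \<in> {0,1}" using pr jC by blast
  moreover have "is_valid n t 0 (props j) {}" unfolding is_valid_def by simp
  moreover have "\<forall>d\<in>{1..n}. (k, NMsg j d (Aux j 0 (props j)) {}) \<in> transit (cfg (Suc k))"
    using M(2) r(2) by auto
  ultimately show ?thesis using r(1) unfolding BCm_def by blast
qed

lemma next_P1: "act k = Loc j \<Longrightarrow> pcr k j = (P1, q) \<Longrightarrow> pcr (Suc k) j = (P2, Suc q)"
  using next_gen nx by fastforce
lemma next_P2: "act k = Loc j \<Longrightarrow> pcr k j = (P2, q) \<Longrightarrow> pcr (Suc k) j = (P3, q) \<and>
    (j = coord n q \<longrightarrow> BCm n t k j q (transit (cfg (Suc k))))"
  using next_gen nx by fastforce
lemma next_P3: "act k = Loc j \<Longrightarrow> pcr k j = (P3, q) \<Longrightarrow> pcr (Suc k) j = (P3w, q) \<and> tim (Suc k) j (2*q) \<noteq> NotStarted"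
  using next_gen nx by fastforce
lemma next_P3w: "act k = Loc j \<Longrightarrow> pcr k j = (P3w, q) \<Longrightarrow> pcr (Suc k) j = (P4, q)"
  using next_gen nx by fastforce
lemma next_P4: "act k = Loc j \<Longrightarrow> pcr k j = (P4, q) \<Longrightarrow> pcr (Suc k) j = (P5, q) \<and>
    (j \<noteq> coord n q \<longrightarrow> BCm n t k j q (transit (cfg (Suc k))))"
  using next_gen nx by fastforce
lemma next_P5: "act k = Loc j \<Longrightarrow> pcr k j = (P5, q) \<Longrightarrow> pcr (Suc k) j = (P6, q)"
  using next_gen nx by fastforce
lemma next_P6: "act k = Loc j \<Longrightarrow> pcr k j = (P6, q) \<Longrightarrow> pcr (Suc k) j = (P6w, q) \<and> tim (Suc k) j (2*q+1) \<noteq> NotStarted"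
  using next_gen nx by fastforce
lemma next_P6w: "act k = Loc j \<Longrightarrow> pcr k j = (P6w, q) \<Longrightarrow> pcr (Suc k) j = (P7, q)"
  using next_gen nx by fastforce
lemma next_P7: "act k = Loc j \<Longrightarrow> pcr k j = (P7, q) \<Longrightarrow> pcr (Suc k) j = (P1, q)"
  using next_gen nx by fastforce

end

context ex begin

definition BC :: "nat \<Rightarrow> nat \<Rightarrow> bool" where
  "BC j q = (\<exists>k. BCm n t k j q (transit (cfg (Suc k))))"

lemma got:
  assumes "BCm n t k j q (transit (cfg (Suc k)))" "j \<in> {1..n}" "i \<in> C"
  shows "\<exists>k' e P. e \<in> {0,1} \<and> is_valid n t q e P \<and> Aux j q e \<in> aux k' i \<and> needed q e P \<subseteq> aux k' i"
proof -
  obtain e P where eP: "e \<in> {0,1}" "is_valid n t q e P"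
    "\<forall>d\<in>{1..n}. (k, NMsg j d (Aux j q e) P) \<in> transit (cfg (Suc k))"
    using assms(1) unfolding BCm_def by blast
  let ?m = "NMsg j i (Aux j q e) P"
  have "(k, ?m) \<in> transit (cfg (Suc k))" using eP(3) assms(3) by blast
  then obtain k' where k': "act k' = Rcv i (k, ?m)" using reliable[of "(k, ?m)" "Suc k"] assms(3) by auto
  from rcv_step[OF k'] have c: "cl (cfg (Suc k')) i = recv_update n t (cl (cfg k') i) ?m" by simp
  have "well_formed n ?m" using eP(1) assms(2) unfolding well_formed_def by simp
  then have "aux (Suc k') i = aux k' i \<union> {Aux j q e} \<union> needed q e P"
    using c recv_aux[of n ?m t] eP(2) by simp
  then show ?thesis using eP(1,2) by blast
qed

lemma gotall:
  assumes "\<forall>j\<in>C. BC j q" "i \<in> C"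
  shows "\<exists>K. \<forall>j\<in>C. \<exists>e P. e \<in> {0,1} \<and> is_valid n t q e P \<and> Aux j q e \<in> aux K i \<and> needed q e P \<subseteq> aux K i"
proof (rule fin_combine[where P = "\<lambda>j k. \<exists>e P. e \<in> {0,1} \<and> is_valid n t q e P \<and> Aux j q e \<in> aux k i \<and> needed q e P \<subseteq> aux k i"])
  show "finite C" by simp
  show "\<forall>j\<in>C. \<exists>k e P. e \<in> {0,1} \<and> is_valid n t q e P \<and> Aux j q e \<in> aux k i \<and> needed q e P \<subseteq> aux k i"
    using assms got unfolding BC_def by blast
  fix j k k' assume "\<exists>e P. e \<in> {0,1} \<and> is_valid n t q e P \<and> Aux j q e \<in> aux k i \<and> needed q e P \<subseteq> aux k i" "k \<le> k'"
  then show "\<exists>e P. e \<in> {0,1} \<and> is_valid n t q e P \<and> Aux j q e \<in> aux k' i \<and> needed q e P \<subseteq> aux k' i"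
    using aux_mono[of k k' i] by blast
qed

lemma V_ev:
  assumes "\<forall>j\<in>C. BC j q" "i \<in> C"
  shows "\<exists>K. \<forall>k'\<ge>K. vals n t (Suc q) (aux k' i) \<noteq> {}"
proof -
  obtain K where K: "\<forall>j\<in>C. \<exists>e P. e \<in> {0,1} \<and> is_valid n t q e P \<and> Aux j q e \<in> aux K i \<and> needed q e P \<subseteq> aux K i"
    using gotall[OF assms] by blast
  have "vals n t (Suc q) (aux K i) \<noteq> {}"
    by (rule vals_from[OF nt C_fin C_card]) (use K in auto)
  then have "\<forall>k'\<ge>K. vals n t (Suc q) (aux k' i) \<noteq> {}" using vals_mono aux_mono by blast
  then show ?thesis by blast
qed

lemma RS_ev:
  assumes "\<forall>j\<in>C. BC j q" "i \<in> C"
  shows "\<exists>K. \<forall>k'\<ge>K. card (rsenders (aux k' i) q) \<ge> n - t"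
proof -
  obtain K where K: "\<forall>j\<in>C. \<exists>e P. e \<in> {0,1} \<and> is_valid n t q e P \<and> Aux j q e \<in> aux K i \<and> needed q e P \<subseteq> aux K i"
    using gotall[OF assms] by blast
  have "\<forall>k'\<ge>K. card (rsenders (aux k' i) q) \<ge> n - t"
  proof (intro allI impI)
    fix k' assume "K \<le> k'"
    then have "C \<subseteq> rsenders (aux k' i) q" using K aux_mono[of K k' i] unfolding rsenders_def by blast
    moreover have "rsenders (aux k' i) q \<subseteq> {1..n}"
    proof
      fix j assume "j \<in> rsenders (aux k' i) q"
      then obtain v where "Aux j q v \<in> aux k' i" unfolding rsenders_def by blast
      from aux_sgn[OF this] show "j \<in> {1..n}" by simp
    qed
    ultimately have "card C \<le> card (rsenders (aux k' i) q)" by (meson card_mono finite_atLeastAtMost finite_subset)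
    then show "card (rsenders (aux k' i) q) \<ge> n - t" using C_card by linarith
  qed
  then show ?thesis by blast
qed

end

context ex begin

lemma pc0: "pcr 0 j = (PInit, 0)"
  using cfg0 unfolding init_cfg_def init_ls_def by simp

lemma phase1:
  assumes j: "j \<in> C" and k0: "pcr k0 j = (P1, q)" and allBC: "\<forall>i\<in>C. BC i q"
  shows "(\<exists>k. pcr k j = (P5, Suc q)) \<and> BC j (Suc q)"
proof -
  obtain KV where KV: "\<forall>k'\<ge>KV. vals n t (Suc q) (aux k' j) \<noteq> {}" using V_ev[OF allBC j] by blast
  obtain k1 where k1: "act k1 = Loc j" "pcr k1 j = (P1, q)"
    using leave[OF j k0] en_simple by fastforce
  have s2: "pcr (Suc k1) j = (P2, Suc q)" using next_P1[OF k1] .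
  have "\<exists>k1. \<forall>k'\<ge>k1. pcr k' j = (P2, Suc q) \<longrightarrow> enabled n t props j (cl (cfg k') j)"
  proof (intro exI[of _ KV] allI impI)
    fix k' assume "KV \<le> k'" "pcr k' j = (P2, Suc q)"
    then show "enabled n t props j (cl (cfg k') j)" using KV by (intro en_P2) auto
  qed
  then obtain k2 where k2: "act k2 = Loc j" "pcr k2 j = (P2, Suc q)" using leave[OF j s2] by blast
  note s3 = next_P2[OF k2]
  obtain k3 where k3: "act k3 = Loc j" "pcr k3 j = (P3, Suc q)"
    using leave[OF j conjunct1[OF s3]] en_simple by fastforce
  note s3w = next_P3[OF k3]
  obtain KT where KT: "\<forall>k'\<ge>KT. tim k' j (2 * Suc q) = Expired"
    using timer_eventually[OF j conjunct2[OF s3w]] by blast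
  have "\<exists>k1. \<forall>k'\<ge>k1. pcr k' j = (P3w, Suc q) \<longrightarrow> enabled n t props j (cl (cfg k') j)"
  proof (intro exI[of _ KT] allI impI)
    fix k' assume "KT \<le> k'" "pcr k' j = (P3w, Suc q)"
    then show "enabled n t props j (cl (cfg k') j)" using KT by (intro en_P3w) auto
  qed
  then obtain k4 where k4: "act k4 = Loc j" "pcr k4 j = (P3w, Suc q)" using leave[OF j conjunct1[OF s3w]] by blast
  note s4 = next_P3w[OF k4]
  have "\<exists>k1. \<forall>k'\<ge>k1. pcr k' j = (P4, Suc q) \<longrightarrow> enabled n t props j (cl (cfg k') j)"
  proof (intro exI[of _ KV] allI impI)
    fix k' assume "KV \<le> k'" "pcr k' j = (P4, Suc q)"
    then show "enabled n t props j (cl (cfg k') j)" using KV by (intro en_P4) auto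
  qed
  then obtain k5 where k5: "act k5 = Loc j" "pcr k5 j = (P4, Suc q)" using leave[OF j s4] by blast
  note s5 = next_P4[OF k5]
  have "BC j (Suc q)"
  proof (cases "j = coord n (Suc q)")
    case True then show ?thesis using s3 unfolding BC_def by blast
  next
    case False then show ?thesis using s5 unfolding BC_def by blast
  qed
  then show ?thesis using s5 by blast
qed

lemma phase2:
  assumes j: "j \<in> C" and k0: "pcr k0 j = (P5, q)" and allBC: "\<forall>i\<in>C. BC i q"
  shows "\<exists>k. pcr k j = (P1, q)"
proof -
  obtain KR where KR: "\<forall>k'\<ge>KR. card (rsenders (aux k' j) q) \<ge> n - t" using RS_ev[OF allBC j] by blast
  have "\<exists>k1. \<forall>k'\<ge>k1. pcr k' j = (P5, q) \<longrightarrow> enabled n t props j (cl (cfg k') j)"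
  proof (intro exI[of _ KR] allI impI)
    fix k' assume "KR \<le> k'" "pcr k' j = (P5, q)"
    then show "enabled n t props j (cl (cfg k') j)" using KR by (intro en_P5) auto
  qed
  then obtain k1 where k1: "act k1 = Loc j" "pcr k1 j = (P5, q)" using leave[OF j k0] by blast
  note s6 = next_P5[OF k1]
  obtain k2 where k2: "act k2 = Loc j" "pcr k2 j = (P6, q)"
    using leave[OF j s6] en_simple by fastforce
  note s6w = next_P6[OF k2]
  obtain KT where KT: "\<forall>k'\<ge>KT. tim k' j (2 * q + 1) = Expired"
    using timer_eventually[OF j conjunct2[OF s6w]] by blast
  have "\<exists>k1. \<forall>k'\<ge>k1. pcr k' j = (P6w, q) \<longrightarrow> enabled n t props j (cl (cfg k') j)"
  proof (intro exI[of _ KT] allI impI)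
    fix k' assume "KT \<le> k'" "pcr k' j = (P6w, q)"
    then show "enabled n t props j (cl (cfg k') j)" using KT by (intro en_P6w) auto
  qed
  then obtain k3 where k3: "act k3 = Loc j" "pcr k3 j = (P6w, q)" using leave[OF j conjunct1[OF s6w]] by blast
  note s7 = next_P6w[OF k3]
  obtain k4 where k4: "act k4 = Loc j" "pcr k4 j = (P7, q)"
    using leave[OF j s7] en_simple by fastforce
  show ?thesis using next_P7[OF k4] by blast
qed

lemma rounds: "\<forall>j\<in>C. (\<exists>k. pcr k j = (P1, q)) \<and> BC j q"
proof (induction q)
  case 0
  show ?case
  proof
    fix j assume j: "j \<in> C"
    obtain k where k: "act k = Loc j" "pcr k j = (PInit, 0)"
      using leave[OF j pc0] en_simple by fastforce
    show "(\<exists>k. pcr k j = (P1, 0)) \<and> BC j 0" using next_PInit[OF k] unfolding BC_def by blast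
  qed
next
  case (Suc q)
  have BCq: "\<forall>i\<in>C. BC i q" using Suc by blast
  have p1: "\<forall>j\<in>C. (\<exists>k. pcr k j = (P5, Suc q)) \<and> BC j (Suc q)"
    using phase1 Suc BCq by blast
  then have "\<forall>i\<in>C. BC i (Suc q)" by blast
  then show ?case using p1 phase2 by blast
qed

end

theorem lemma4:
  fixes n t r i :: nat and F :: "nat set" and props :: "nat \<Rightarrow> nat"
    and cfg :: "nat \<Rightarrow> config" and act :: "nat \<Rightarrow> action"
  assumes "3 * t < n"
    and "F \<subseteq> {1..n}" and "card F \<le> t"
    and "\<forall>j \<in> {1..n}. props j \<in> {0, 1}"
    and "execution n t F props cfg act"
    and "r > 0"
    and "i \<in> {1..n}" and "i \<notin> F"
  shows "\<exists>k v S. v \<in> {0, 1} \<and> S \<subseteq> l_aux (cl (cfg k) i) \<and> is_valid n t r v S"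
proof -
  interpret ex n t F props cfg act using assms(1-5) by unfold_locales
  obtain q where q: "r = Suc q" using assms(6) gr0_implies_Suc by blast
  have "\<forall>j\<in>C. BC j q" using rounds by blast
  then obtain K where "\<forall>k'\<ge>K. vals n t (Suc q) (aux k' i) \<noteq> {}" using V_ev assms(7,8) by blast
  then have "vals n t r (aux K i) \<noteq> {}" using q by blast
  then show ?thesis unfolding vals_def by blast
qed


end
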